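(* Let $\mathbf P=(P,\leq,{}',0,1)$ be an orthogonal lub-complete poset. Then the following conditions are equivalent: (i) $\mathbf P$ is a paraorthomodular poset. (ii) For all $x,y\in P$, $x\rightarrow_K y=1$ implies $x\leq y$. (iii) For all $x,y\in P$, $x\rightarrow_N y=1$ implies $x\leq y$.
   Context: $(P,\leq,{}',0,1)$ is a bounded poset with an antitone involution ${}'$; orthogonal means $x\leq y'$ implies $x\vee y$ exists; lub-complete means for every lower bound $x$ of a finite subset $M$ there is a maximal lower bound of $M$ above $x$; paraorthomodular means $x\leq y$ and $x'\wedge y=0$ together imply $x=y$. For $A\subseteq P$, $L(A)$, $U(A)$ are the lower and upper cones, $\mathrm{Max}\,A$, $\mathrm{Min}\,A$ the sets of maximal and minimal elements; joins/meets with sets are elementwise. Kalmbach implication: $x\rightarrow_K y:=\mathrm{Max}\,L(x',y)\vee \mathrm{Max}\,L(x',y')\vee (x\wedge \mathrm{Min}\,U(x',y))$; non-tolens implication: $x\rightarrow_N y:=y'\rightarrow_K x'$. "$=1$" means equal to $\{1\}$. *)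

theory Defs
  imports Main
begin

text \<open>A bounded poset is a type of class {order_bot,order_top} (0 = bot, 1 = top);
  the antitone involution is a function cmp.\<close>

definition antitone_involution :: "('a::order \<Rightarrow> 'a) \<Rightarrow> bool" where
  "antitone_involution cmp \<longleftrightarrow> (\<forall>x y. x \<le> y \<longrightarrow> cmp y \<le> cmp x) \<and> (\<forall>x. cmp (cmp x) = x)"

definition LC :: "'a::order set \<Rightarrow> 'a set" where
  "LC A = {x. \<forall>a\<in>A. x \<le> a}"

definition UC :: "'a::order set \<Rightarrow> 'a set" where
  "UC A = {x. \<forall>a\<in>A. a \<le> x}"

definition MaxS :: "'a::order set \<Rightarrow> 'a set" where
  "MaxS A = {x\<in>A. \<forall>y\<in>A. x \<le> y \<longrightarrow> x = y}"

definition MinS :: "'a::order set \<Rightarrow> 'a set" where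
  "MinS A = {x\<in>A. \<forall>y\<in>A. y \<le> x \<longrightarrow> x = y}"

definition is_join :: "'a::order \<Rightarrow> 'a \<Rightarrow> 'a \<Rightarrow> bool" where
  "is_join x y s \<longleftrightarrow> x \<le> s \<and> y \<le> s \<and> (\<forall>z. x \<le> z \<and> y \<le> z \<longrightarrow> s \<le> z)"

definition is_meet :: "'a::order \<Rightarrow> 'a \<Rightarrow> 'a \<Rightarrow> bool" where
  "is_meet x y m \<longleftrightarrow> m \<le> x \<and> m \<le> y \<and> (\<forall>z. z \<le> x \<and> z \<le> y \<longrightarrow> z \<le> m)"

definition orthogonal :: "('a::order \<Rightarrow> 'a) \<Rightarrow> bool" where
  "orthogonal cmp \<longleftrightarrow> (\<forall>x y. x \<le> cmp y \<longrightarrow> (\<exists>s. is_join x y s))"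

definition lub_complete :: "'a::order itself \<Rightarrow> bool" where
  "lub_complete _ \<longleftrightarrow> (\<forall>(M::'a set) x. finite M \<and> x \<in> LC M \<longrightarrow> (\<exists>y\<in>MaxS (LC M). x \<le> y))"

definition paraorthomodular :: "('a::{order_bot,order_top} \<Rightarrow> 'a) \<Rightarrow> bool" where
  "paraorthomodular cmp \<longleftrightarrow> (\<forall>x y. x \<le> y \<and> is_meet (cmp x) y bot \<longrightarrow> x = y)"

text \<open>Elementwise joins/meets of sets (only existing joins/meets are collected;
  in orthogonal lub-complete posets all joins occurring below exist).\<close>
definition set_join :: "'a::order set \<Rightarrow> 'a set \<Rightarrow> 'a set" where
  "set_join A B = {s. \<exists>a\<in>A. \<exists>b\<in>B. is_join a b s}"

definition elem_meet :: "'a::order \<Rightarrow> 'a set \<Rightarrow> 'a set" where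
  "elem_meet x B = {m. \<exists>b\<in>B. is_meet x b m}"

definition impK :: "('a::order \<Rightarrow> 'a) \<Rightarrow> 'a \<Rightarrow> 'a \<Rightarrow> 'a set" where
  "impK cmp x y = set_join (set_join (MaxS (LC {cmp x, y})) (MaxS (LC {cmp x, cmp y})))
                     (elem_meet x (MinS (UC {cmp x, y})))"

definition impN :: "('a::order \<Rightarrow> 'a) \<Rightarrow> 'a \<Rightarrow> 'a \<Rightarrow> 'a set" where
  "impN cmp x y = impK cmp (cmp y) (cmp x)"

end

theory Submission
  imports Defs
begin

locale aiP =
  fixes c :: "'a::{order_bot,order_top} \<Rightarrow> 'a"
  assumes anti: "x \<le> y \<Longrightarrow> c y \<le> c x"
    and inv[simp]: "c (c x) = x"
    and orth: "x \<le> c y \<Longrightarrow> \<exists>s. is_join x y s"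
    and lubc: "finite M \<Longrightarrow> x \<in> LC M \<Longrightarrow> \<exists>y\<in>MaxS (LC M). x \<le> y"
begin

lemma le_c_iff: "c x \<le> c y \<longleftrightarrow> y \<le> x"
  by (metis anti inv)

lemma c_bot[simp]: "c bot = top"
  by (metis anti inv bot_least top.extremum_uniqueI)

lemma c_top[simp]: "c top = bot"
  by (metis c_bot inv)

lemma c_eq_top: "c z = top \<Longrightarrow> z = bot"
  by (metis c_top inv)

lemma join_to_meet: "is_join p q j \<Longrightarrow> is_meet (c p) (c q) (c j)"
  unfolding is_join_def is_meet_def by (metis le_c_iff inv)

lemma meet_top: "is_meet (x::'a) top m \<Longrightarrow> m = x"
  unfolding is_meet_def by (metis order.antisym order.refl top_greatest)

lemma meet_exists: "c x \<le> u \<Longrightarrow> \<exists>m. is_meet x u m"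
  using orth[of "c x" "c u"] join_to_meet by fastforce

lemma dir1:
  assumes pom: "paraorthomodular c"
    and K: "impK c x y = {top}"
  shows "x \<le> y"
proof -
  obtain a where a: "a \<in> MaxS (LC {c x, y})"
    using lubc[of "{c x, y}" bot] by (auto simp: LC_def)
  obtain b where b: "b \<in> MaxS (LC {c x, c y})"
    using lubc[of "{c x, c y}" bot] by (auto simp: LC_def)
  have ax: "a \<le> c x" and ay: "a \<le> y" using a by (auto simp: MaxS_def LC_def)
  have bx: "b \<le> c x" and by': "b \<le> c y" using b by (auto simp: MaxS_def LC_def)
  have "a \<le> c b" using ay by' le_c_iff by (metis inv order.trans)
  then obtain t where t: "is_join a b t" using orth by blast
  have tx: "t \<le> c x" using t ax bx by (simp add: is_join_def)
  have minU: "u = top" if u: "u \<in> MinS (UC {c x, y})" for u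
  proof -
    have xu: "c x \<le> u" using u by (auto simp: MinS_def UC_def)
    obtain m where m: "is_meet x u m" using meet_exists[OF xu] by blast
    have "t \<le> c m" using tx m unfolding is_meet_def by (meson anti order.trans)
    then obtain s where s: "is_join t m s" using orth by blast
    have "s \<in> impK c x y"
      unfolding impK_def set_join_def elem_meet_def using a b t u m s by blast
    then have "s = top" using K by auto
    moreover have "s \<le> u" using s m tx xu unfolding is_join_def is_meet_def
      by (meson order.trans)
    ultimately show ?thesis by (simp add: top.extremum_unique)
  qed
  have mx: "c w \<in> MinS (UC {c x, y})" if w: "w \<in> MaxS (LC {x, c y})" for w
  proof -
    have "c w \<in> UC {c x, y}" using w by (auto simp: MaxS_def LC_def UC_def le_c_iff)
         (metis inv le_c_iff)
    moreover have "v = c w" if "v \<in> UC {c x, y}" "v \<le> c w" for v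
    proof -
      have "c v \<in> LC {x, c y}" using that(1) by (auto simp: LC_def UC_def)
          (metis inv le_c_iff)+
      moreover have "w \<le> c v" using that(2) by (metis inv le_c_iff)
      ultimately have "w = c v" using w by (auto simp: MaxS_def)
      then show ?thesis by simp
    qed
    ultimately show ?thesis by (auto simp: MinS_def)
  qed
  have L0: "z = bot" if zz: "z \<le> x" "z \<le> c y" for z
  proof -
    obtain w where w: "w \<in> MaxS (LC {x, c y})" "z \<le> w"
      using lubc[of "{x, c y}" z] zz by (auto simp: LC_def)
    have "c w = top" using minU[OF mx[OF w(1)]] .
    then have "w = bot" by (rule c_eq_top)
    then show ?thesis using w(2) by (simp add: bot_unique)
  qed
  obtain w where w: "w \<in> MaxS (LC {x, c y})"
    using lubc[of "{x, c y}" bot] by (auto simp: LC_def)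
  have utop: "top \<in> MinS (UC {c x, y})" using mx[OF w] minU[OF mx[OF w]] by simp
  have mt: "is_meet x top x" by (simp add: is_meet_def)
  have "t \<le> c x" by (rule tx)
  then obtain s where s: "is_join t x s" using orth by blast
  have "s \<in> impK c x y"
    unfolding impK_def set_join_def elem_meet_def using a b t utop mt s by blast
  then have stop: "is_join t x top" using K s by auto
  have "is_meet (c t) (c x) bot"
    unfolding is_meet_def
  proof (intro conjI allI impI)
    fix z assume z: "z \<le> c t \<and> z \<le> c x"
    then have "t \<le> c z" "x \<le> c z" by (metis inv le_c_iff)+
    then have "top \<le> c z" using stop by (simp add: is_join_def)
    then show "z \<le> bot" using c_eq_top top.extremum_unique by blast
  qed auto
  with tx pom have teq: "t = c x" unfolding paraorthomodular_def by blast
  have "is_meet (c b) (c y) bot"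
    unfolding is_meet_def
  proof (intro conjI allI impI)
    fix z assume z: "z \<le> c b \<and> z \<le> c y"
    then have "b \<le> c z" "y \<le> c z" by (metis inv le_c_iff)+
    then have "a \<le> c z" using ay by (meson order.trans)
    then have "t \<le> c z" using t \<open>b \<le> c z\<close> by (simp add: is_join_def)
    then have "z \<le> x" using teq by (metis inv le_c_iff)
    then show "z \<le> bot" using L0 z by (metis order.refl)
  qed auto
  with by' pom have "b = c y" unfolding paraorthomodular_def by blast
  then have "c y \<le> c x" using bx by simp
  then show ?thesis by (simp add: le_c_iff)
qed

lemma dir2:
  assumes H: "\<forall>x y. impK c x y = {top} \<longrightarrow> x \<le> y"
  shows "paraorthomodular c"
  unfolding paraorthomodular_def
proof (intro allI impI)
  fix x y assume xy: "x \<le> y \<and> is_meet (c x) y bot"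
  have yx': "c y \<le> c x" using xy anti by blast
  have meet0: "z = bot" if "z \<le> c x" "z \<le> y" for z
    using xy that unfolding is_meet_def by (simp add: bot_unique)
  have U1: "u = top" if "c y \<le> u" "x \<le> u" for u
  proof -
    have "c u \<le> y" "c u \<le> c x" using that by (metis inv le_c_iff)+
    then have "c u = bot" using meet0 by blast
    then show ?thesis by (metis c_bot inv)
  qed
  have yjoin: "is_join (c y) y top"
    unfolding is_join_def
  proof (intro conjI allI impI)
    fix s assume "c y \<le> s \<and> y \<le> s"
    then have "c s \<le> y" "c s \<le> c x" using yx' by (metis inv le_c_iff order.trans)+
    then have "c s = bot" using meet0 by blast
    then show "top \<le> s" by (metis c_bot inv order.refl)
  qed auto
  have MaxB: "MaxS (LC {c y, c x}) = {c y}"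
    using yx' by (auto simp: MaxS_def LC_def intro: order.antisym)
  have MinU: "MinS (UC {c y, x}) = {top}"
    using U1 by (auto simp: MinS_def UC_def)
  have "impK c y x = {top}"
  proof -
    have sub: "s = top" if "s \<in> impK c y x" for s
    proof -
      from that obtain t m a b u where a: "a \<in> MaxS (LC {c y, x})"
        and b: "b \<in> MaxS (LC {c y, c x})" and t: "is_join a b t"
        and u: "u \<in> MinS (UC {c y, x})" and m: "is_meet y u m" and s: "is_join t m s"
        unfolding impK_def set_join_def elem_meet_def by auto
      have "b = c y" using b MaxB by auto
      moreover have "a \<le> c y" using a by (auto simp: MaxS_def LC_def)
      ultimately have "t = c y" using t unfolding is_join_def by (meson order.antisym order.refl)
      moreover have "m = y" using u MinU m meet_top by auto
      ultimately have "is_join (c y) y s" using s by simp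
      then show ?thesis using yjoin unfolding is_join_def by (meson order.antisym)
    qed
    obtain a where a: "a \<in> MaxS (LC {c y, x})"
      using lubc[of "{c y, x}" bot] by (auto simp: LC_def)
    have "a \<le> c y" using a by (auto simp: MaxS_def LC_def)
    then have "is_join a (c y) (c y)" by (simp add: is_join_def)
    moreover have "is_meet y top y" by (simp add: is_meet_def)
    ultimately have "top \<in> impK c y x"
      unfolding impK_def set_join_def elem_meet_def using a MaxB MinU yjoin by blast
    with sub show ?thesis by blast
  qed
  then have "y \<le> x" using H by blast
  then show "x = y" using xy by (simp add: order.antisym)
qed

end

theorem theorem5:
  fixes cmp :: "'a::{order_bot,order_top} \<Rightarrow> 'a"
  assumes "antitone_involution cmp"
    and "orthogonal cmp"
    and "lub_complete TYPE('a)"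
  shows "(paraorthomodular cmp \<longleftrightarrow> (\<forall>x y. impK cmp x y = {top} \<longrightarrow> x \<le> y))
       \<and> (paraorthomodular cmp \<longleftrightarrow> (\<forall>x y. impN cmp x y = {top} \<longrightarrow> x \<le> y))"
proof -
  interpret aiP cmp
    using assms unfolding antitone_involution_def orthogonal_def lub_complete_def
    by unfold_locales blast+
  have K: "paraorthomodular cmp \<longleftrightarrow> (\<forall>x y. impK cmp x y = {top} \<longrightarrow> x \<le> y)"
    using dir1 dir2 by blast
  have "(\<forall>x y. impK cmp x y = {top} \<longrightarrow> x \<le> y) \<longleftrightarrow> (\<forall>x y. impN cmp x y = {top} \<longrightarrow> x \<le> y)"
    unfolding impN_def by (metis inv le_c_iff)
  with K show ?thesis by blast
qed

end
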